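(* In the setting of the context, with $V(\mathbf{x})=\sum_{\mathbf{n}=\mathbf{x}}^{\boldsymbol{\ell}}\mathscr{C}_{\mathbf{n},\mathbf{x}}V^{\mathbf{n}}$ where $\mathscr{C}_{\mathbf{n},\mathbf{x}}=\frac{(-1)^{|\mathbf{n}|-|\mathbf{x}|}}{(2|\mathbf{x}|+\omega+1)_{|\mathbf{n}|-|\mathbf{x}|}}\prod_{p=1}^N\binom{n_p}{x_p}(|\mathbf{n}|_1^{p-1}+|\mathbf{x}|_1^{p}+|\boldsymbol{\ell}|_p^N+a_p+\omega+1)_{n_p-x_p}$, the inverse change of basis is: for every $\mathbf{n}$ with $0\le n_p\le\ell_p$, \[ V^{\mathbf{n}}=\sum_{\mathbf{x}=\mathbf{n}}^{\boldsymbol{\ell}}\overline{\mathscr{C}}_{\mathbf{x},\mathbf{n}}V(\mathbf{x}),\qquad \overline{\mathscr{C}}_{\mathbf{x},\mathbf{n}}=\frac{1}{(|\mathbf{n}|+|\mathbf{x}|+\omega)_{|\mathbf{x}|-|\mathbf{n}|}}\prod_{p=1}^N\binom{x_p}{n_p}\big(|\mathbf{n}|_1^{p}+|\mathbf{x}|_1^{p-1}+|\boldsymbol{\ell}|_p^N+a_p+\omega+1\big)_{x_p-n_p}. \]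
   Context: Notation: for $N$-tuples of integers, $|\mathbf{n}|_j^k=\sum_{p=j}^k n_p$ (equal to $0$ if $j>k$), $|\mathbf{n}|=|\mathbf{n}|_1^N$; $(x)_k=x(x+1)\cdots(x+k-1)$, $(x)_0=1$. A sum $\sum_{\mathbf{n}=\mathbf{a}}^{\mathbf{b}}$ means the sum over all $\mathbf{n}$ with $a_p\le n_p\le b_p$ for every $p$. Setting: $N\ge1$, $\boldsymbol{\ell}=(\ell_1,\dots,\ell_N)$ nonnegative integers, $\mathcal{V}=\mathbb{C}^{\ell_1+1}\otimes\cdots\otimes\mathbb{C}^{\ell_N+1}$ with basis $V^{\mathbf{n}}$, $0\le n_p\le\ell_p$. Scalars $\theta_0,\theta_0^\star,h,h^\star,\omega,\omega^\star,a_1,\dots,a_N\in\mathbb{C}$ satisfy the standing constraints: $h,h^\star\neq0$; $\omega,\omega^\star\notin\{-2|\boldsymbol{\ell}|+1,\dots,-1\}$; for each $i$, none of $a_i,\ a_i+\omega-\omega^\star,\ a_i-|\boldsymbol{\ell}|-\omega^\star,\ a_i+|\boldsymbol{\ell}|+\omega$ lies in $\{-\ell_i,\dots,-1\}$; and with $S^\pm(\ell,a)=\{\pm(a+k+\tfrac12(\omega-\omega^\star)):k=1,\dots,\ell\}$, for all $i,j$ and signs, $S^{\epsilon_i}(\ell_i,a_i)$ and $S^{\epsilon_j}(\ell_j,a_j)$ are in general position (one contains the other or their union is not a string). *)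

theory Defs
  imports Complex_Main "HOL-Library.Function_Algebras"
begin

text \<open>N-tuples are lists of length N; entry p (1-based, 1 <= p <= N) of n is n ! (p - 1).\<close>

definition psum :: "nat list \<Rightarrow> nat \<Rightarrow> nat \<Rightarrow> nat" where
  "psum n j k = (\<Sum>p\<in>{j..k}. n ! (p - 1))"

definition tsum :: "nat list \<Rightarrow> nat" where
  "tsum n = psum n 1 (length n)"

definition tbox :: "nat list \<Rightarrow> nat list \<Rightarrow> nat list set" where
  "tbox a b = {m. length m = length a \<and> (\<forall>p<length a. a ! p \<le> m ! p \<and> m ! p \<le> b ! p)}"

text \<open>Vectors of V are coordinate functions on tuples; V^n is the basis vector at n.\<close>
definition basisV :: "nat list \<Rightarrow> (nat list \<Rightarrow> complex)" where
  "basisV n = (\<lambda>m. if m = n then 1 else 0)"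

definition coefC :: "nat list \<Rightarrow> complex list \<Rightarrow> complex \<Rightarrow> nat list \<Rightarrow> nat list \<Rightarrow> complex" where
  "coefC ell a \<omega> n x =
     (-1) ^ (tsum n - tsum x) / pochhammer (2 * of_nat (tsum x) + \<omega> + 1) (tsum n - tsum x)
     * (\<Prod>p\<in>{1..length ell}. of_nat ((n ! (p - 1)) choose (x ! (p - 1)))
        * pochhammer (of_nat (psum n 1 (p - 1) + psum x 1 p + psum ell p (length ell)) + a ! (p - 1) + \<omega> + 1)
                     (n ! (p - 1) - x ! (p - 1)))"

definition coefCbar :: "nat list \<Rightarrow> complex list \<Rightarrow> complex \<Rightarrow> nat list \<Rightarrow> nat list \<Rightarrow> complex" where
  "coefCbar ell a \<omega> x n =
     1 / pochhammer (of_nat (tsum n + tsum x) + \<omega>) (tsum x - tsum n)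
     * (\<Prod>p\<in>{1..length ell}. of_nat ((x ! (p - 1)) choose (n ! (p - 1)))
        * pochhammer (of_nat (psum n 1 p + psum x 1 (p - 1) + psum ell p (length ell)) + a ! (p - 1) + \<omega> + 1)
                     (x ! (p - 1) - n ! (p - 1)))"

definition Vvec :: "nat list \<Rightarrow> complex list \<Rightarrow> complex \<Rightarrow> nat list \<Rightarrow> (nat list \<Rightarrow> complex)" where
  "Vvec ell a \<omega> x = (\<Sum>n\<in>tbox x ell. (\<lambda>m. coefC ell a \<omega> n x * basisV n m))"

definition is_string :: "complex set \<Rightarrow> bool" where
  "is_string S \<longleftrightarrow> (\<exists>c m. S = {c + of_nat k | k. k \<le> m})"

definition Spm :: "bool \<Rightarrow> nat \<Rightarrow> complex \<Rightarrow> complex \<Rightarrow> complex \<Rightarrow> complex set" where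
  "Spm pos l a \<omega> \<omega>s = {(if pos then 1 else -1) * (a + of_nat k + (\<omega> - \<omega>s) / 2) | k. 1 \<le> k \<and> k \<le> l}"

definition general_position :: "complex set \<Rightarrow> complex set \<Rightarrow> bool" where
  "general_position S T \<longleftrightarrow> S \<subseteq> T \<or> T \<subseteq> S \<or> \<not> is_string (S \<union> T)"

end

theory Submission
  imports Defs
begin



lemma poch_diff1:
  fixes x :: complex
  shows "pochhammer x (Suc j) - pochhammer (x+1) (Suc j) = - of_nat (Suc j) * pochhammer (x+1) j"
proof -
  have "pochhammer x (Suc j) = x * pochhammer (x+1) j" by (rule pochhammer_rec)
  moreover have "pochhammer (x+1) (Suc j) = (x + 1 + of_nat j) * pochhammer (x+1) j" by (rule pochhammer_rec')
  ultimately show ?thesis by (simp add: algebra_simps)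
qed

lemma poch_diff2:
  fixes y :: complex
  shows "pochhammer (y+1) (Suc r) - pochhammer y (Suc r) = of_nat (Suc r) * pochhammer (y+1) r"
proof -
  have "pochhammer y (Suc r) = y * pochhammer (y+1) r" by (rule pochhammer_rec)
  moreover have "pochhammer (y+1) (Suc r) = (y + 1 + of_nat r) * pochhammer (y+1) r" by (rule pochhammer_rec')
  ultimately show ?thesis by (simp add: algebra_simps)
qed

definition Fs :: "nat \<Rightarrow> nat \<Rightarrow> nat \<Rightarrow> complex \<Rightarrow> complex" where
  "Fs d1 d2 t C = (\<Sum>j\<le>d2. (if j \<le> t then of_nat (d1 choose (t-j)) else 0) * of_nat (d2 choose j)
      * pochhammer (C + of_nat (t-j)) j * pochhammer (C + of_nat d1 + of_nat t) (d2 - j))"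

lemma Fs_base: "Fs 0 d2 t C = of_nat (d2 choose t) * pochhammer C d2"
proof -
  have "Fs 0 d2 t C = (\<Sum>j\<le>d2. (if j = t then of_nat (d2 choose j)
      * pochhammer C j * pochhammer (C + of_nat j) (d2 - j) else 0))"
    unfolding Fs_def by (rule sum.cong) auto
  also have "\<dots> = (if t \<le> d2 then of_nat (d2 choose t) * pochhammer C t * pochhammer (C + of_nat t) (d2 - t) else 0)"
    by (simp add: sum.delta)
  also have "\<dots> = of_nat (d2 choose t) * pochhammer C d2"
    by (auto simp: pochhammer_product[symmetric] binomial_eq_0)
  finally show ?thesis .
qed

lemma poch_d1: fixes x :: complex
  shows "pochhammer x j - pochhammer (x+1) j = - of_nat j * pochhammer (x+1) (j - 1)"
  using poch_diff1[of x "j - 1"] by (cases j) auto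

lemma poch_d2: fixes y :: complex
  shows "pochhammer (y+1) r - pochhammer y r = of_nat r * pochhammer (y+1) (r - 1)"
  using poch_diff2[of y "r - 1"] by (cases r) auto

lemma binom_shift: "(d2 choose j) * (d2 - j) = (d2 choose Suc j) * Suc j"
proof (cases d2)
  case 0 then show ?thesis by simp
next
  case (Suc n)
  have "(d2 - j) * (d2 choose j) = d2 * (n choose j)" using binomial_absorb_comp[of d2 j] Suc by simp
  moreover have "Suc j * (d2 choose Suc j) = d2 * (n choose j)" using Suc_times_binomial[of j n] Suc by simp
  ultimately show ?thesis by (simp add: mult.commute)
qed

lemma binom_shift_c: "(of_nat (d2 choose j) :: complex) * of_nat (d2 - j) = of_nat (d2 choose Suc j) * of_nat (Suc j)"
  by (metis binom_shift of_nat_mult)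

lemma Fs_step_term:
  fixes C :: complex and d1 d2 t' j :: nat
  defines "g \<equiv> (\<lambda>j. if j \<le> Suc t' then of_nat (d2 choose j) * of_nat j * of_nat (d1 choose (Suc t' - j))
       * pochhammer (C + of_nat (Suc t' - j) + 1) (j - 1) * pochhammer (C + of_nat d1 + of_nat (Suc t') + 1) (d2 - j) else 0)"
  shows "(if j \<le> Suc t' then of_nat (Suc d1 choose (Suc t'-j)) else 0) * of_nat (d2 choose j)
      * pochhammer (C + of_nat (Suc t'-j)) j * pochhammer (C + of_nat (Suc d1) + of_nat (Suc t')) (d2 - j)
    - (if j \<le> Suc t' then of_nat (d1 choose (Suc t'-j)) else 0) * of_nat (d2 choose j)
      * pochhammer ((C+1) + of_nat (Suc t'-j)) j * pochhammer ((C+1) + of_nat d1 + of_nat (Suc t')) (d2 - j)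
    - (if j \<le> t' then of_nat (d1 choose (t'-j)) else 0) * of_nat (d2 choose j)
      * pochhammer ((C+1) + of_nat (t'-j)) j * pochhammer ((C+1) + of_nat d1 + of_nat t') (d2 - j)
    = g (Suc j) - g j"
proof -
  have cs: "j > Suc t' \<or> j = Suc t' \<or> (\<exists>k. Suc t' = j + Suc k)"
  proof (cases "j < Suc t'")
    case True then have "Suc t' = j + Suc (t' - j)" by simp
    then show ?thesis by blast
  qed auto
  consider "j > Suc t'" | "j = Suc t'" | k where "Suc t' = j + Suc k"
    using cs by blast
  then show ?thesis
  proof cases
    case 1 then show ?thesis unfolding g_def by auto
  next
    case 2
    define b where "b = (of_nat (d2 choose j) :: complex)"
    define Y where "Y = C + of_nat d1 + of_nat (Suc t')"
    define r where "r = d2 - j"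
    have e: "pochhammer C (Suc t') - pochhammer (C+1) (Suc t') = - of_nat (Suc t') * pochhammer (C+1) t'"
      by (rule poch_diff1)
    have gj: "g j = b * of_nat (Suc t') * pochhammer (C + 1) t' * pochhammer (Y + 1) r"
      unfolding g_def b_def Y_def r_def using 2 by simp
    have gs: "g (Suc j) = 0" unfolding g_def using 2 by simp
    have y1: "C + of_nat (Suc d1) + of_nat (Suc t') = Y + 1" "C + 1 + of_nat d1 + of_nat (Suc t') = Y + 1"
      unfolding Y_def by (simp_all add: algebra_simps)
    have lhs: "?thesis \<longleftrightarrow> b * pochhammer C (Suc t') * pochhammer (Y+1) r
       - b * pochhammer (C+1) (Suc t') * pochhammer (Y+1) r = g (Suc j) - g j"
      using 2 unfolding y1 b_def r_def by simp
    have "b * pochhammer C (Suc t') * pochhammer (Y+1) r - b * pochhammer (C+1) (Suc t') * pochhammer (Y+1) r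
      = b * pochhammer (Y+1) r * (pochhammer C (Suc t') - pochhammer (C+1) (Suc t'))"
      by (simp add: algebra_simps)
    also have "\<dots> = g (Suc j) - g j" unfolding e gj gs by (simp add: algebra_simps)
    finally show ?thesis using lhs by simp
  next
    case 3
    define b where "b = (of_nat (d2 choose j) :: complex)"
    define B0 where "B0 = (of_nat (d1 choose k) :: complex)"
    define B1 where "B1 = (of_nat (d1 choose Suc k) :: complex)"
    define x where "x = C + of_nat (Suc k)"
    define Y where "Y = C + of_nat d1 + of_nat (Suc t')"
    define r where "r = d2 - j"
    have tj: "Suc t' - j = Suc k" "t' - j = k" "Suc t' - Suc j = k" using 3 by auto
    have le: "j \<le> Suc t'" "j \<le> t'" "Suc j \<le> Suc t'" using 3 by auto
    have x1: "C + of_nat (Suc t' - j) = x" "C + 1 + of_nat (Suc t' - j) = x + 1" "C + 1 + of_nat (t' - j) = x"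
      "C + of_nat (Suc t' - j) + 1 = x + 1" "C + of_nat (Suc t' - Suc j) + 1 = x"
      unfolding x_def tj by (simp_all add: algebra_simps)
    have y1: "C + of_nat (Suc d1) + of_nat (Suc t') = Y + 1" "C + 1 + of_nat d1 + of_nat (Suc t') = Y + 1"
       "C + 1 + of_nat d1 + of_nat t' = Y" "C + of_nat d1 + of_nat (Suc t') + 1 = Y + 1"
      unfolding Y_def by (simp_all add: algebra_simps)
    have gj: "g j = b * of_nat j * B1 * pochhammer (x+1) (j - 1) * pochhammer (Y+1) r"
      unfolding g_def if_P[OF le(1)] tj b_def B1_def r_def x_def Y_def by (simp add: algebra_simps)
    have gsj: "g (Suc j) = b * of_nat r * B0 * pochhammer x j * pochhammer (Y+1) (r - 1)"
    proof -
      have "g (Suc j) = of_nat (d2 choose Suc j) * of_nat (Suc j) * B0 * pochhammer x j * pochhammer (Y+1) (r - 1)"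
        unfolding g_def if_P[OF le(3)] tj B0_def r_def x_def Y_def by (simp add: algebra_simps)
      then show ?thesis unfolding b_def r_def using binom_shift_c[of d2 j] by simp
    qed
    have bs: "of_nat (Suc d1 choose Suc k) = B0 + B1" unfolding B0_def B1_def by simp
    have lhs: "?thesis \<longleftrightarrow> (B0 + B1) * b * pochhammer x j * pochhammer (Y+1) r
       - B1 * b * pochhammer (x+1) j * pochhammer (Y+1) r
       - B0 * b * pochhammer x j * pochhammer Y r = g (Suc j) - g j"
      unfolding if_P[OF le(1)] if_P[OF le(2)] tj bs b_def B0_def B1_def r_def x_def Y_def by (simp add: algebra_simps)
    have d1: "pochhammer x j - pochhammer (x+1) j = - of_nat j * pochhammer (x+1) (j - 1)" by (rule poch_d1)
    have d2: "pochhammer (Y+1) r - pochhammer Y r = of_nat r * pochhammer (Y+1) (r - 1)" by (rule poch_d2)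
    have "(B0 + B1) * b * pochhammer x j * pochhammer (Y+1) r
       - B1 * b * pochhammer (x+1) j * pochhammer (Y+1) r
       - B0 * b * pochhammer x j * pochhammer Y r
       = B1 * b * pochhammer (Y+1) r * (pochhammer x j - pochhammer (x+1) j)
         + B0 * b * pochhammer x j * (pochhammer (Y+1) r - pochhammer Y r)"
      by (simp add: algebra_simps)
    also have "\<dots> = g (Suc j) - g j" unfolding d1 d2 gj gsj by (simp add: algebra_simps)
    finally show ?thesis using lhs by simp
  qed
qed


lemma Fs_step: "Fs (Suc d1) d2 (Suc t') C = Fs d1 d2 (Suc t') (C+1) + Fs d1 d2 t' (C+1)"
proof -
  define g where "g \<equiv> (\<lambda>j. if j \<le> Suc t' then of_nat (d2 choose j) * of_nat j * of_nat (d1 choose (Suc t' - j))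
       * pochhammer (C + of_nat (Suc t' - j) + 1) (j - 1) * pochhammer (C + of_nat d1 + of_nat (Suc t') + 1) (d2 - j) else (0::complex))"
  have "Fs (Suc d1) d2 (Suc t') C - Fs d1 d2 (Suc t') (C+1) - Fs d1 d2 t' (C+1) = (\<Sum>j\<le>d2. g (Suc j) - g j)"
    unfolding Fs_def sum_subtractf[symmetric] g_def by (rule sum.cong[OF refl], rule Fs_step_term)
  also have "\<dots> = (\<Sum>j<Suc d2. g (Suc j) - g j)" by (simp only: lessThan_Suc_atMost)
  also have "\<dots> = g (Suc d2) - g 0" by (rule sum_lessThan_telescope)
  also have "\<dots> = 0" unfolding g_def by simp
  finally show ?thesis by (simp add: algebra_simps)
qed

lemma Fs_eq: "Fs d1 d2 t C = of_nat ((d1+d2) choose t) * pochhammer (C + of_nat d1) d2"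
proof (induction d1 arbitrary: t C)
  case 0 then show ?case by (simp add: Fs_base)
next
  case (Suc d1)
  show ?case
  proof (cases t)
    case 0
    have "Fs (Suc d1) d2 t C = (\<Sum>j\<le>d2. if j = 0 then pochhammer (C + of_nat (Suc d1)) d2 else 0)"
      unfolding Fs_def 0 by (rule sum.cong) auto
    then show ?thesis using 0 by simp
  next
    case (Suc t')
    have "Fs (Suc d1) d2 t C = Fs d1 d2 (Suc t') (C+1) + Fs d1 d2 t' (C+1)" using Suc Fs_step by simp
    also have "\<dots> = (of_nat ((d1+d2) choose Suc t') + of_nat ((d1+d2) choose t')) * pochhammer (C + 1 + of_nat d1) d2"
      using Suc.IH by (simp add: algebra_simps)
    also have "\<dots> = of_nat ((Suc d1+d2) choose t) * pochhammer (C + of_nat (Suc d1)) d2"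
      using Suc by (simp add: algebra_simps)
    finally show ?thesis .
  qed
qed




lemma poch_nz:
  fixes z :: complex
  assumes "\<And>i. i < n \<Longrightarrow> z + of_nat i \<noteq> 0"
  shows "pochhammer z n \<noteq> 0"
proof
  assume "pochhammer z n = 0"
  then obtain k where "k < n" "z = - of_nat k" unfolding pochhammer_eq_0_iff by blast
  then show False using assms[of k] by simp
qed

lemma num_aux:
  fixes B1 B2 c xi xe :: complex
  assumes "B1 * (xe - xi) = B2 * (xi + 1)"
  shows "(B1 + B2) * (c + 2 * (xi + 1)) = B1 * (c + (xi + 1) + (xe + 1)) + B2 * (c + (xi + 1))"
proof -
  have "(B1 + B2) * (c + 2 * (xi + 1)) - (B1 * (c + (xi + 1) + (xe + 1)) + B2 * (c + (xi + 1)))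
     = B2 * (xi + 1) - B1 * (xe - xi)" by (simp add: algebra_simps)
  then show ?thesis using assms by simp
qed

definition Hf :: "nat \<Rightarrow> complex \<Rightarrow> nat \<Rightarrow> complex" where
  "Hf d c k = (if k = 0 then 0 else of_nat ((d - 1) choose (k - 1)) / pochhammer (c + of_nat k) d)"

lemma S_term:
  fixes c :: complex
  assumes d: "d \<ge> 1" and k: "k \<le> d" and nz: "\<And>i. 1 \<le> i \<Longrightarrow> i \<le> 2*d - 1 \<Longrightarrow> c + of_nat i \<noteq> 0"
  shows "of_nat (d choose k) / (pochhammer (c + of_nat k) k * pochhammer (c + 2 * of_nat k + 1) (d - k))
         = Hf d c k + Hf d c (Suc k)"
proof -
  consider "k = 0" | "k = d" | "0 < k \<and> k < d" using k by linarith
  then show ?thesis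
  proof cases
    case 1 then show ?thesis using d by (simp add: Hf_def add.commute)
  next
    case 2 then show ?thesis using d by (simp add: Hf_def binomial_eq_0)
  next
    case 3
    obtain e where e: "d = Suc e" using d by (cases d) auto
    obtain i where i: "k = Suc i" using 3 by (cases k) auto
    have ie: "i < e" using 3 e i by simp
    define Q where "Q = pochhammer (c + of_nat k) (Suc d)"
    have Qnz: "Q \<noteq> 0" unfolding Q_def
    proof (rule poch_nz)
      fix j assume "j < Suc d"
      then have "c + of_nat (k + j) \<noteq> 0" using 3 by (intro nz) auto
      then show "c + of_nat k + of_nat j \<noteq> 0" by (simp add: add.assoc)
    qed
    define P where "P = pochhammer (c + of_nat k) k"
    define R where "R = pochhammer (c + 2 * of_nat k + 1) (d - k)"
    define Pd where "Pd = pochhammer (c + of_nat k) d"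
    define Pd1 where "Pd1 = pochhammer (c + of_nat (Suc k)) d"
    have Q1: "Q = P * (c + 2 * of_nat k) * R"
    proof -
      have "Suc d = k + Suc (d - k)" using 3 by simp
      then have "Q = P * pochhammer (c + of_nat k + of_nat k) (Suc (d - k))"
        unfolding Q_def P_def by (metis pochhammer_product')
      also have "pochhammer (c + of_nat k + of_nat k) (Suc (d - k)) = (c + 2 * of_nat k) * R"
        unfolding R_def pochhammer_rec by (simp add: algebra_simps)
      finally show ?thesis by (simp add: mult.assoc)
    qed
    have Q2: "Q = Pd * (c + of_nat k + of_nat d)" unfolding Q_def Pd_def pochhammer_rec' by simp
    have Q3: "Q = (c + of_nat k) * Pd1" unfolding Q_def Pd1_def pochhammer_rec by (simp add: algebra_simps)
    have nz1: "P \<noteq> 0" "R \<noteq> 0" "c + 2 * of_nat k \<noteq> 0" using Q1 Qnz by auto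
    have nz2: "Pd \<noteq> 0" "c + of_nat k + of_nat d \<noteq> 0" using Q2 Qnz by auto
    have nz3: "Pd1 \<noteq> 0" "c + of_nat k \<noteq> 0" using Q3 Qnz by auto
    have f1: "1 / (P * R) = (c + 2 * of_nat k) / Q" unfolding Q1 using nz1 by simp
    have f2: "1 / Pd = (c + of_nat k + of_nat d) / Q" unfolding Q2 using nz2 by simp
    have f3: "1 / Pd1 = (c + of_nat k) / Q" unfolding Q3 using nz3 by simp
    have bn: "d choose k = (e choose i) + (e choose Suc i)" using e i by simp
    have bs: "(e choose i) * (e - i) = (e choose Suc i) * Suc i" by (rule binom_shift)
    have bsc: "(of_nat (e choose i) :: complex) * (of_nat e - of_nat i) = of_nat (e choose Suc i) * (of_nat i + 1)"
      using arg_cong[OF bs, of "of_nat :: nat \<Rightarrow> complex"] ie by (simp add: of_nat_diff algebra_simps)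
    have num: "of_nat (d choose k) * (c + 2 * of_nat k)
       = of_nat (e choose i) * (c + of_nat k + of_nat d) + of_nat (e choose Suc i) * (c + of_nat k)"
    proof -
      have dk: "(of_nat d :: complex) = of_nat e + 1" "(of_nat k :: complex) = of_nat i + 1" using e i by simp_all
      show ?thesis unfolding bn of_nat_add dk by (rule num_aux[OF bsc])
    qed
    have "Hf d c k + Hf d c (Suc k) = of_nat (e choose i) / Pd + of_nat (e choose Suc i) / Pd1"
    proof -
      have k0: "(k = 0) = False" "(Suc k = 0) = False" "k - 1 = i" "d - 1 = e" "Suc k - 1 = Suc i" using e i by simp_all
      show ?thesis unfolding Hf_def Pd_def Pd1_def by (simp only: k0 if_False)
    qed
    also have "\<dots> = (of_nat (e choose i) * (c + of_nat k + of_nat d) + of_nat (e choose Suc i) * (c + of_nat k)) / Q"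
    proof -
      have "of_nat (e choose i) / Pd + of_nat (e choose Suc i) / Pd1 = of_nat (e choose i) * (1 / Pd) + of_nat (e choose Suc i) * (1 / Pd1)"
        by (simp only: divide_inverse mult_1_left)
      also have "\<dots> = of_nat (e choose i) * ((c + of_nat k + of_nat d) / Q) + of_nat (e choose Suc i) * ((c + of_nat k) / Q)"
        unfolding f2 f3 by (rule refl)
      also have "\<dots> = (of_nat (e choose i) * (c + of_nat k + of_nat d) + of_nat (e choose Suc i) * (c + of_nat k)) / Q"
        by (simp only: times_divide_eq_right, simp only: add_divide_distrib)
      finally show ?thesis .
    qed
    also have "\<dots> = of_nat (d choose k) * (c + 2 * of_nat k) / Q" by (simp only: num)
    also have "\<dots> = of_nat (d choose k) * ((c + 2 * of_nat k) / Q)" by (simp only: times_divide_eq_right)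
    also have "\<dots> = of_nat (d choose k) / (P * R)" unfolding f1[symmetric] by (simp only: divide_inverse mult_1_left)
    finally show ?thesis unfolding P_def R_def by (simp only:)
  qed
qed

lemma S_zero:
  fixes c :: complex
  assumes d: "d \<ge> 1" and nz: "\<And>i. 1 \<le> i \<Longrightarrow> i \<le> 2*d - 1 \<Longrightarrow> c + of_nat i \<noteq> 0"
  shows "(\<Sum>k\<le>d. (-1)^(d-k) * of_nat (d choose k) / (pochhammer (c + of_nat k) k * pochhammer (c + 2 * of_nat k + 1) (d - k))) = 0"
proof -
  define G where "G = (\<lambda>k. (-1)^k * Hf d c k)"
  have "(\<Sum>k\<le>d. (-1)^(d-k) * of_nat (d choose k) / (pochhammer (c + of_nat k) k * pochhammer (c + 2 * of_nat k + 1) (d - k)))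
      = (\<Sum>k<Suc d. (-1)^d * (G k - G (Suc k)))"
    unfolding lessThan_Suc_atMost
  proof (rule sum.cong[OF refl])
    fix k assume "k \<in> {..d}"
    then have kd: "k \<le> d" by simp
    have sg: "(-1::complex)^(d-k) = (-1)^d * (-1)^k"
    proof -
      have "(-1::complex)^d = (-1)^(d-k) * (-1)^k" using kd by (metis le_add_diff_inverse2 power_add)
      moreover have "(-1::complex)^k * (-1)^k = 1" by (simp flip: power_mult_distrib)
      ultimately have "(-1::complex)^d * (-1)^k = (-1)^(d-k) * ((-1)^k * (-1)^k)" by (simp add: mult.assoc)
      then show ?thesis using \<open>(-1::complex)^k * (-1)^k = 1\<close> by simp
    qed
    show "(-1)^(d-k) * of_nat (d choose k) / (pochhammer (c + of_nat k) k * pochhammer (c + 2 * of_nat k + 1) (d - k))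
        = (-1)^d * (G k - G (Suc k))"
    proof -
      have "(-1)^(d-k) * of_nat (d choose k) / (pochhammer (c + of_nat k) k * pochhammer (c + 2 * of_nat k + 1) (d - k))
        = (-1)^(d-k) * (of_nat (d choose k) / (pochhammer (c + of_nat k) k * pochhammer (c + 2 * of_nat k + 1) (d - k)))"
        by (simp only: times_divide_eq_right)
      also have "\<dots> = (-1)^(d-k) * (Hf d c k + Hf d c (Suc k))" by (simp only: S_term[OF d kd nz])
      also have "\<dots> = (-1)^d * (G k - G (Suc k))" unfolding G_def sg by (simp add: algebra_simps)
      finally show ?thesis .
    qed
  qed
  also have "\<dots> = (-1)^d * (G 0 - G (Suc d))" by (simp only: sum_distrib_left[symmetric] sum_lessThan_telescope')
  also have "\<dots> = 0"
  proof -
    have "G 0 = 0" unfolding G_def Hf_def by simp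
    moreover have "G (Suc d) = 0" unfolding G_def Hf_def using d by (simp add: binomial_eq_0)
    ultimately show ?thesis by simp
  qed
  finally show ?thesis .
qed




definition pre :: "nat list \<Rightarrow> nat \<Rightarrow> nat" where
  "pre x p = sum_list (take p x)"

definition Wt :: "(nat \<Rightarrow> complex) \<Rightarrow> nat list \<Rightarrow> nat list \<Rightarrow> nat list \<Rightarrow> complex" where
  "Wt A m n x = (\<Prod>p<length x. of_nat (m!p choose x!p) * of_nat (x!p choose n!p)
      * pochhammer (A p + of_nat (pre n (Suc p) + pre x p)) (x!p - n!p)
      * pochhammer (A p + of_nat (pre m p + pre x (Suc p))) (m!p - x!p))"

definition Kt :: "(nat \<Rightarrow> complex) \<Rightarrow> nat list \<Rightarrow> nat list \<Rightarrow> complex" where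
  "Kt A m n = (\<Prod>p<length m. of_nat (m!p choose n!p)
      * pochhammer (A p + of_nat (pre m p + pre n (Suc p))) (m!p - n!p))"

lemma pre_snoc_le: "p \<le> length xs \<Longrightarrow> pre (xs @ [y]) p = pre xs p"
  unfolding pre_def by simp

lemma pre_snoc_full: "pre (xs @ [y]) (Suc (length xs)) = sum_list xs + y"
  unfolding pre_def by simp

lemma pre_full: "pre xs (length xs) = sum_list xs"
  unfolding pre_def by simp

lemma tbox_snoc:
  assumes "length ns = length ms"
  shows "tbox (ns @ [nl]) (ms @ [ml]) = (\<lambda>(xs, xl). xs @ [xl]) ` (tbox ns ms \<times> {nl..ml})"
proof (rule set_eqI)
  fix x
  show "x \<in> tbox (ns @ [nl]) (ms @ [ml]) \<longleftrightarrow> x \<in> (\<lambda>(xs, xl). xs @ [xl]) ` (tbox ns ms \<times> {nl..ml})"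
  proof
    assume x: "x \<in> tbox (ns @ [nl]) (ms @ [ml])"
    then have lx: "length x = Suc (length ns)" unfolding tbox_def by simp
    then obtain xs xl where xe: "x = xs @ [xl]" by (metis length_Suc_conv_rev)
    have lxs: "length xs = length ns" using lx xe by simp
    have "xs \<in> tbox ns ms"
      unfolding tbox_def
    proof (intro CollectI conjI allI impI)
      show "length xs = length ns" by (rule lxs)
    next
      fix p assume p: "p < length ns"
      have "(ns @ [nl]) ! p \<le> x ! p \<and> x ! p \<le> (ms @ [ml]) ! p" using x p unfolding tbox_def by simp
      then show "ns ! p \<le> xs ! p" "xs ! p \<le> ms ! p" using p lxs assms xe by (simp_all add: nth_append)
    qed
    moreover have "nl \<le> xl \<and> xl \<le> ml"
    proof -
      have all: "\<forall>p<Suc (length ns). (ns @ [nl]) ! p \<le> x ! p \<and> x ! p \<le> (ms @ [ml]) ! p"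
        using x unfolding tbox_def by simp
      have "(ns @ [nl]) ! length ns \<le> x ! length ns \<and> x ! length ns \<le> (ms @ [ml]) ! length ns"
        using all[rule_format, of "length ns"] by simp
      then show ?thesis using lxs assms xe by (simp add: nth_append)
    qed
    ultimately show "x \<in> (\<lambda>(xs, xl). xs @ [xl]) ` (tbox ns ms \<times> {nl..ml})" using xe by force
  next
    assume "x \<in> (\<lambda>(xs, xl). xs @ [xl]) ` (tbox ns ms \<times> {nl..ml})"
    then obtain xs xl where xe: "x = xs @ [xl]" and xs: "xs \<in> tbox ns ms" and xl: "nl \<le> xl" "xl \<le> ml" by auto
    have lxs: "length xs = length ns" using xs unfolding tbox_def by simp
    show "x \<in> tbox (ns @ [nl]) (ms @ [ml])"
      unfolding tbox_def
    proof (rule CollectI, rule conjI)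
      show "length x = length (ns @ [nl])" using xe lxs by simp
    next
      show "\<forall>p<length (ns @ [nl]). (ns @ [nl]) ! p \<le> x ! p \<and> x ! p \<le> (ms @ [ml]) ! p"
      proof (intro allI impI)
        fix p assume p: "p < length (ns @ [nl])"
        show "(ns @ [nl]) ! p \<le> x ! p \<and> x ! p \<le> (ms @ [ml]) ! p"
        proof (cases "p < length ns")
          case True
          then show ?thesis using xs xe lxs assms unfolding tbox_def by (simp add: nth_append)
        next
          case False
          then have "p = length ns" using p by simp
          then show ?thesis using xe lxs assms xl by (simp add: nth_append)
        qed
      qed
    qed
  qed
qed

lemma finite_tbox: "finite (tbox n m)"
proof -
  define B where "B = (\<Sum>p<length n. m ! p)"
  have "tbox n m \<subseteq> {xs. set xs \<subseteq> {0..B} \<and> length xs = length n}"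
  proof
    fix x assume x: "x \<in> tbox n m"
    have lx: "length x = length n" using x unfolding tbox_def by simp
    have "set x \<subseteq> {0..B}"
    proof
      fix v assume "v \<in> set x"
      then obtain p where p: "p < length x" "x ! p = v" by (metis in_set_conv_nth)
      have "v \<le> m ! p" using x p lx unfolding tbox_def by auto
      moreover have "m ! p \<le> B" unfolding B_def
        by (rule member_le_sum) (use p lx in auto)
      ultimately show "v \<in> {0..B}" by simp
    qed
    then show "x \<in> {xs. set xs \<subseteq> {0..B} \<and> length xs = length n}" using lx by simp
  qed
  moreover have "finite {xs. set xs \<subseteq> {0..B} \<and> length xs = length n}"
    by (rule finite_lists_length_eq) simp
  ultimately show ?thesis by (rule finite_subset)
qed


lemma Wt_snoc:
  assumes ln: "length ns = length xs" and lm: "length ms = length xs"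
  shows "Wt A (ms@[ml]) (ns@[nl]) (xs@[xl]) = Wt A ms ns xs * (of_nat (ml choose xl) * of_nat (xl choose nl)
     * pochhammer (A (length xs) + of_nat (sum_list ns + nl + sum_list xs)) (xl - nl)
     * pochhammer (A (length xs) + of_nat (sum_list ms + (sum_list xs + xl))) (ml - xl))"
proof -
  let ?L = "length xs"
  have "Wt A (ms@[ml]) (ns@[nl]) (xs@[xl]) = (\<Prod>p<Suc ?L. of_nat ((ms@[ml])!p choose (xs@[xl])!p) * of_nat ((xs@[xl])!p choose (ns@[nl])!p)
      * pochhammer (A p + of_nat (pre (ns@[nl]) (Suc p) + pre (xs@[xl]) p)) ((xs@[xl])!p - (ns@[nl])!p)
      * pochhammer (A p + of_nat (pre (ms@[ml]) p + pre (xs@[xl]) (Suc p))) ((ms@[ml])!p - (xs@[xl])!p))"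
    unfolding Wt_def by simp
  also have "\<dots> = (\<Prod>p<?L. of_nat ((ms@[ml])!p choose (xs@[xl])!p) * of_nat ((xs@[xl])!p choose (ns@[nl])!p)
      * pochhammer (A p + of_nat (pre (ns@[nl]) (Suc p) + pre (xs@[xl]) p)) ((xs@[xl])!p - (ns@[nl])!p)
      * pochhammer (A p + of_nat (pre (ms@[ml]) p + pre (xs@[xl]) (Suc p))) ((ms@[ml])!p - (xs@[xl])!p))
      * (of_nat ((ms@[ml])!?L choose (xs@[xl])!?L) * of_nat ((xs@[xl])!?L choose (ns@[nl])!?L)
      * pochhammer (A ?L + of_nat (pre (ns@[nl]) (Suc ?L) + pre (xs@[xl]) ?L)) ((xs@[xl])!?L - (ns@[nl])!?L)
      * pochhammer (A ?L + of_nat (pre (ms@[ml]) ?L + pre (xs@[xl]) (Suc ?L))) ((ms@[ml])!?L - (xs@[xl])!?L))"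
    by (rule prod.lessThan_Suc)
  also have "(\<Prod>p<?L. of_nat ((ms@[ml])!p choose (xs@[xl])!p) * of_nat ((xs@[xl])!p choose (ns@[nl])!p)
      * pochhammer (A p + of_nat (pre (ns@[nl]) (Suc p) + pre (xs@[xl]) p)) ((xs@[xl])!p - (ns@[nl])!p)
      * pochhammer (A p + of_nat (pre (ms@[ml]) p + pre (xs@[xl]) (Suc p))) ((ms@[ml])!p - (xs@[xl])!p)) = Wt A ms ns xs"
    unfolding Wt_def
  proof (rule prod.cong[OF refl])
    fix p assume "p \<in> {..<?L}"
    then have p: "p < ?L" by simp
    then have "p \<le> length ns" "Suc p \<le> length ns" "p \<le> length xs" "Suc p \<le> length xs" "p \<le> length ms" "Suc p \<le> length ms"
      using ln lm by simp_all
    then show "of_nat ((ms@[ml])!p choose (xs@[xl])!p) * of_nat ((xs@[xl])!p choose (ns@[nl])!p)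
      * pochhammer (A p + of_nat (pre (ns@[nl]) (Suc p) + pre (xs@[xl]) p)) ((xs@[xl])!p - (ns@[nl])!p)
      * pochhammer (A p + of_nat (pre (ms@[ml]) p + pre (xs@[xl]) (Suc p))) ((ms@[ml])!p - (xs@[xl])!p)
      = of_nat (ms!p choose xs!p) * of_nat (xs!p choose ns!p)
      * pochhammer (A p + of_nat (pre ns (Suc p) + pre xs p)) (xs!p - ns!p)
      * pochhammer (A p + of_nat (pre ms p + pre xs (Suc p))) (ms!p - xs!p)"
      using p ln lm by (simp add: nth_append pre_snoc_le)
  qed
  also have "(of_nat ((ms@[ml])!?L choose (xs@[xl])!?L) * of_nat ((xs@[xl])!?L choose (ns@[nl])!?L)
      * pochhammer (A ?L + of_nat (pre (ns@[nl]) (Suc ?L) + pre (xs@[xl]) ?L)) ((xs@[xl])!?L - (ns@[nl])!?L)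
      * pochhammer (A ?L + of_nat (pre (ms@[ml]) ?L + pre (xs@[xl]) (Suc ?L))) ((ms@[ml])!?L - (xs@[xl])!?L))
    = of_nat (ml choose xl) * of_nat (xl choose nl)
     * pochhammer (A (length xs) + of_nat (sum_list ns + nl + sum_list xs)) (xl - nl)
     * pochhammer (A (length xs) + of_nat (sum_list ms + (sum_list xs + xl))) (ml - xl)"
  proof -
    have e: "pre (ns@[nl]) (Suc ?L) = sum_list ns + nl" using pre_snoc_full[of ns nl] ln by simp
    have e2: "pre (xs@[xl]) ?L = sum_list xs" using pre_snoc_le[of ?L xs xl] pre_full[of xs] by simp
    have e3: "pre (ms@[ml]) ?L = sum_list ms" using pre_snoc_le[of ?L ms ml] pre_full[of ms] lm by simp
    have e4: "pre (xs@[xl]) (Suc ?L) = sum_list xs + xl" by (rule pre_snoc_full)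
    show ?thesis unfolding e e2 e3 e4 using ln lm by (simp add: nth_append)
  qed
  finally show ?thesis .
qed

lemma Kt_snoc:
  assumes ln: "length ns = length ms"
  shows "Kt A (ms@[ml]) (ns@[nl]) = Kt A ms ns * (of_nat (ml choose nl)
     * pochhammer (A (length ms) + of_nat (sum_list ms + (sum_list ns + nl))) (ml - nl))"
proof -
  let ?L = "length ms"
  have "Kt A (ms@[ml]) (ns@[nl]) = (\<Prod>p<Suc ?L. of_nat ((ms@[ml])!p choose (ns@[nl])!p)
      * pochhammer (A p + of_nat (pre (ms@[ml]) p + pre (ns@[nl]) (Suc p))) ((ms@[ml])!p - (ns@[nl])!p))"
    unfolding Kt_def by simp
  also have "\<dots> = (\<Prod>p<?L. of_nat ((ms@[ml])!p choose (ns@[nl])!p)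
      * pochhammer (A p + of_nat (pre (ms@[ml]) p + pre (ns@[nl]) (Suc p))) ((ms@[ml])!p - (ns@[nl])!p))
      * (of_nat ((ms@[ml])!?L choose (ns@[nl])!?L)
      * pochhammer (A ?L + of_nat (pre (ms@[ml]) ?L + pre (ns@[nl]) (Suc ?L))) ((ms@[ml])!?L - (ns@[nl])!?L))"
    by (rule prod.lessThan_Suc)
  also have "(\<Prod>p<?L. of_nat ((ms@[ml])!p choose (ns@[nl])!p)
      * pochhammer (A p + of_nat (pre (ms@[ml]) p + pre (ns@[nl]) (Suc p))) ((ms@[ml])!p - (ns@[nl])!p)) = Kt A ms ns"
    unfolding Kt_def
  proof (rule prod.cong[OF refl])
    fix p assume "p \<in> {..<?L}"
    then have p: "p < ?L" by simp
    then show "of_nat ((ms@[ml])!p choose (ns@[nl])!p)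
      * pochhammer (A p + of_nat (pre (ms@[ml]) p + pre (ns@[nl]) (Suc p))) ((ms@[ml])!p - (ns@[nl])!p)
      = of_nat (ms!p choose ns!p) * pochhammer (A p + of_nat (pre ms p + pre ns (Suc p))) (ms!p - ns!p)"
      using p ln by (simp add: nth_append pre_snoc_le)
  qed
  also have "(of_nat ((ms@[ml])!?L choose (ns@[nl])!?L)
      * pochhammer (A ?L + of_nat (pre (ms@[ml]) ?L + pre (ns@[nl]) (Suc ?L))) ((ms@[ml])!?L - (ns@[nl])!?L))
      = of_nat (ml choose nl) * pochhammer (A (length ms) + of_nat (sum_list ms + (sum_list ns + nl))) (ml - nl)"
  proof -
    have e: "pre (ns@[nl]) (Suc ?L) = sum_list ns + nl" using pre_snoc_full[of ns nl] ln by simp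
    have e3: "pre (ms@[ml]) ?L = sum_list ms" using pre_snoc_le[of ?L ms ml] pre_full[of ms] by simp
    show ?thesis unfolding e e3 using ln by (simp add: nth_append)
  qed
  finally show ?thesis .
qed




lemma sum_list_le:
  fixes ns ms :: "nat list"
  assumes "length ns = length ms" "\<forall>p<length ms. ns!p \<le> ms!p"
  shows "sum_list ns \<le> sum_list ms"
proof -
  have "(\<Sum>i\<in>{0..<length ms}. ns!i) \<le> (\<Sum>i\<in>{0..<length ms}. ms!i)" by (rule sum_mono) (use assms in auto)
  then show ?thesis using assms(1) by (simp add: sum_list_sum_nth)
qed

lemma FT:
  assumes "length n = length m" "\<forall>p<length m. n!p \<le> m!p"
  shows "(\<Sum>x\<in>{x\<in>tbox n m. sum_list x = s}. Wt A m n x)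
     = Kt A m n * (if sum_list n \<le> s then of_nat ((sum_list m - sum_list n) choose (s - sum_list n)) else 0)"
  using assms
proof (induction m arbitrary: n s rule: rev_induct)
  case Nil
  then have n: "n = []" by simp
  have tb: "tbox [] [] = {[]}" unfolding tbox_def by auto
  have e: "{x\<in>{[]}. sum_list x = s} = (if s = 0 then {[]} else {})" by auto
  show ?case unfolding n tb e by (simp add: Wt_def Kt_def)
next
  case (snoc ml ms)
  have "n \<noteq> []" using snoc.prems(1) by auto
  then obtain ns nl where n: "n = ns @ [nl]" using rev_exhaust[of n] by blast
  have lns: "length ns = length ms" using snoc.prems(1) n by simp
  have le': "\<forall>p<length ms. ns!p \<le> ms!p"
  proof (intro allI impI)
    fix p assume p: "p < length ms"
    then show "ns!p \<le> ms!p" using snoc.prems(2)[rule_format, of p] lns n by (simp add: nth_append)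
  qed
  have nlml: "nl \<le> ml" using snoc.prems(2)[rule_format, of "length ms"] lns n by (simp add: nth_append)
  define L where "L = length ms"
  define N' where "N' = sum_list ns"
  define M' where "M' = sum_list ms"
  have NM: "N' \<le> M'" unfolding N'_def M'_def by (rule sum_list_le[OF lns le'])
  define lf where "lf = (\<lambda>xl sx. of_nat (ml choose xl) * of_nat (xl choose nl)
     * pochhammer (A L + of_nat (N' + nl + sx)) (xl - nl)
     * pochhammer (A L + of_nat (M' + (sx + xl))) (ml - xl) :: complex)"
  have IH: "\<And>s. (\<Sum>x\<in>{x\<in>tbox ns ms. sum_list x = s}. Wt A ms ns x)
     = Kt A ms ns * (if N' \<le> s then of_nat ((M' - N') choose (s - N')) else 0)"
    unfolding N'_def M'_def using snoc.IH[OF lns le'] by simp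
  have fin: "finite (tbox ns ms)" by (rule finite_tbox)
  have inj: "inj_on (\<lambda>(xs, xl). xs @ [xl]) (tbox ns ms \<times> {nl..ml})"
    by (rule inj_onI) auto
  have step1: "(\<Sum>x\<in>{x\<in>tbox n (ms@[ml]). sum_list x = s}. Wt A (ms@[ml]) n x)
     = (\<Sum>xl\<in>{nl..ml}. \<Sum>xs\<in>tbox ns ms. if sum_list xs + xl = s then Wt A ms ns xs * lf xl (sum_list xs) else 0)"
  proof -
    have "(\<Sum>x\<in>{x\<in>tbox n (ms@[ml]). sum_list x = s}. Wt A (ms@[ml]) n x)
       = (\<Sum>x\<in>tbox n (ms@[ml]). if sum_list x = s then Wt A (ms@[ml]) n x else 0)"
      by (rule sum.inter_filter[OF finite_tbox])
    also have "\<dots> = (\<Sum>x\<in>(\<lambda>(xs, xl). xs @ [xl]) ` (tbox ns ms \<times> {nl..ml}). if sum_list x = s then Wt A (ms@[ml]) n x else 0)"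
      unfolding n tbox_snoc[OF lns] by (rule refl)
    also have "\<dots> = (\<Sum>(xs,xl)\<in>tbox ns ms \<times> {nl..ml}. if sum_list (xs @ [xl]) = s then Wt A (ms@[ml]) n (xs @ [xl]) else 0)"
      by (subst sum.reindex[OF inj]) (simp add: case_prod_unfold)
    also have "\<dots> = (\<Sum>xs\<in>tbox ns ms. \<Sum>xl\<in>{nl..ml}. if sum_list (xs @ [xl]) = s then Wt A (ms@[ml]) n (xs @ [xl]) else 0)"
      by (rule sum.cartesian_product[symmetric])
    also have "\<dots> = (\<Sum>xl\<in>{nl..ml}. \<Sum>xs\<in>tbox ns ms. if sum_list (xs @ [xl]) = s then Wt A (ms@[ml]) n (xs @ [xl]) else 0)"
      by (rule sum.swap)
    also have "\<dots> = (\<Sum>xl\<in>{nl..ml}. \<Sum>xs\<in>tbox ns ms. if sum_list xs + xl = s then Wt A ms ns xs * lf xl (sum_list xs) else 0)"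
    proof (intro sum.cong refl)
      fix xl xs assume xs: "xs \<in> tbox ns ms"
      then have lxs: "length xs = length ns" unfolding tbox_def by simp
      have lx: "length xs = length ms" using lxs lns by simp
      have "Wt A (ms@[ml]) n (xs @ [xl]) = Wt A ms ns xs * lf xl (sum_list xs)"
        unfolding n lf_def L_def N'_def M'_def lx[symmetric] by (rule Wt_snoc) (use lx lns in auto)
      then show "(if sum_list (xs @ [xl]) = s then Wt A (ms@[ml]) n (xs @ [xl]) else 0)
         = (if sum_list xs + xl = s then Wt A ms ns xs * lf xl (sum_list xs) else 0)" by simp
    qed
    finally show ?thesis .
  qed
  have step2: "\<And>xl. (\<Sum>xs\<in>tbox ns ms. if sum_list xs + xl = s then Wt A ms ns xs * lf xl (sum_list xs) else 0)
     = (if xl \<le> s then lf xl (s - xl) * (Kt A ms ns * (if N' \<le> s - xl then of_nat ((M' - N') choose (s - xl - N')) else 0)) else 0)"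
  proof -
    fix xl
    show "(\<Sum>xs\<in>tbox ns ms. if sum_list xs + xl = s then Wt A ms ns xs * lf xl (sum_list xs) else 0)
     = (if xl \<le> s then lf xl (s - xl) * (Kt A ms ns * (if N' \<le> s - xl then of_nat ((M' - N') choose (s - xl - N')) else 0)) else 0)"
    proof (cases "xl \<le> s")
      case True
      have "(\<Sum>xs\<in>tbox ns ms. if sum_list xs + xl = s then Wt A ms ns xs * lf xl (sum_list xs) else 0)
          = (\<Sum>xs\<in>tbox ns ms. lf xl (s - xl) * (if sum_list xs = s - xl then Wt A ms ns xs else 0))"
        by (rule sum.cong[OF refl]) (use True in auto)
      also have "\<dots> = lf xl (s - xl) * (\<Sum>xs\<in>{xs\<in>tbox ns ms. sum_list xs = s - xl}. Wt A ms ns xs)"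
        by (simp add: sum_distrib_left[symmetric] sum.inter_filter[OF fin])
      also have "\<dots> = lf xl (s - xl) * (Kt A ms ns * (if N' \<le> s - xl then of_nat ((M' - N') choose (s - xl - N')) else 0))"
        unfolding IH by simp
      finally show ?thesis using True by simp
    next
      case False
      then show ?thesis by (intro trans[OF sum.neutral]) auto
    qed
  qed
  define T where "T = (\<lambda>xl. if xl \<le> s then lf xl (s - xl) * (Kt A ms ns * (if N' \<le> s - xl then of_nat ((M' - N') choose (s - xl - N')) else 0)) else (0::complex))"
  have sumT: "(\<Sum>x\<in>{x\<in>tbox n (ms@[ml]). sum_list x = s}. Wt A (ms@[ml]) n x) = (\<Sum>xl\<in>{nl..ml}. T xl)"
    unfolding step1 T_def using step2 by simp
  have Kn: "Kt A (ms@[ml]) n = Kt A ms ns * (of_nat (ml choose nl) * pochhammer (A L + of_nat (M' + (N' + nl))) (ml - nl))"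
    unfolding n L_def M'_def N'_def by (rule Kt_snoc[OF lns])
  have sn: "sum_list n = N' + nl" unfolding n N'_def by simp
  have sm: "sum_list (ms @ [ml]) = M' + ml" unfolding M'_def by simp
  show ?case
  proof (cases "N' + nl \<le> s")
    case False
    have "(\<Sum>xl\<in>{nl..ml}. T xl) = 0"
    proof (rule sum.neutral, rule ballI)
      fix xl assume "xl \<in> {nl..ml}"
      then have "nl \<le> xl" by simp
      then have "xl \<le> s \<Longrightarrow> \<not> (N' \<le> s - xl)" using False by linarith
      then show "T xl = 0" unfolding T_def by auto
    qed
    then show ?thesis unfolding sumT sn using False by simp
  next
    case True
    define t where "t = s - (N' + nl)"
    have s_eq: "s = N' + nl + t" unfolding t_def using True by simp
    define dl where "dl = ml - nl"
    define d' where "d' = M' - N'"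
    define C where "C = A L + of_nat (N' + (N' + nl))"
    have ml_eq: "ml = dl + nl" unfolding dl_def using nlml by simp
    have "(\<Sum>xl\<in>{nl..ml}. T xl) = (\<Sum>j\<in>{0..dl}. T (j + nl))"
      unfolding ml_eq using sum.shift_bounds_cl_nat_ivl[of T 0 nl dl] by simp
    also have "\<dots> = (\<Sum>j\<le>dl. (Kt A ms ns * of_nat (ml choose nl)) *
        ((if j \<le> t then of_nat (d' choose (t-j)) else 0) * of_nat (dl choose j)
        * pochhammer (C + of_nat (t-j)) j * pochhammer (C + of_nat d' + of_nat t) (dl - j)))"
      unfolding atLeast0AtMost
    proof (rule sum.cong[OF refl])
      fix j assume "j \<in> {..dl}"
      then have jdl: "j \<le> dl" by simp
      show "T (j + nl) = (Kt A ms ns * of_nat (ml choose nl)) *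
        ((if j \<le> t then of_nat (d' choose (t-j)) else 0) * of_nat (dl choose j)
        * pochhammer (C + of_nat (t-j)) j * pochhammer (C + of_nat d' + of_nat t) (dl - j))"
      proof (cases "j \<le> t")
        case False
        then have "j + nl \<le> s \<Longrightarrow> \<not> (N' \<le> s - (j + nl))" using s_eq by linarith
        then show ?thesis unfolding T_def using False by auto
      next
        case jt: True
        have c1: "j + nl \<le> s" "N' \<le> s - (j + nl)" "s - (j + nl) - N' = t - j" using s_eq jt by simp_all
        have bm: "(ml choose (j + nl)) * ((j + nl) choose nl) = (ml choose nl) * (dl choose j)"
          using choose_mult[of nl "j + nl" ml] jdl ml_eq unfolding dl_def by simp
        have bmc: "(of_nat (ml choose (j + nl)) :: complex) * of_nat ((j + nl) choose nl) = of_nat (ml choose nl) * of_nat (dl choose j)"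
          using arg_cong[OF bm, of "of_nat :: nat \<Rightarrow> complex"] by simp
        have e1: "A L + of_nat (N' + nl + (s - (j + nl))) = C + of_nat (t - j)"
        proof -
          have "N' + nl + (s - (j + nl)) = N' + (N' + nl) + (t - j)" using s_eq jt by simp
          then show ?thesis unfolding C_def by (simp add: add.assoc)
        qed
        have e2: "A L + of_nat (M' + (s - (j + nl) + (j + nl))) = C + of_nat d' + of_nat t"
        proof -
          have h: "M' + (s - (j + nl) + (j + nl)) = N' + (N' + nl) + d' + t" using s_eq jt NM unfolding d'_def by simp
          have "A L + of_nat (M' + (s - (j + nl) + (j + nl))) = A L + of_nat (N' + (N' + nl) + d' + t)" by (simp only: h)
          also have "\<dots> = C + of_nat d' + of_nat t" unfolding C_def by (simp only: of_nat_add add.assoc)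
          finally show ?thesis .
        qed
        have e3: "j + nl - nl = j" "ml - (j + nl) = dl - j" using ml_eq by simp_all
        have "T (j + nl) = lf (j + nl) (s - (j + nl)) * (Kt A ms ns * of_nat ((M' - N') choose (t - j)))"
          unfolding T_def using c1 by simp
        also have "\<dots> = (of_nat (ml choose (j + nl)) * of_nat ((j + nl) choose nl))
            * pochhammer (C + of_nat (t - j)) j * pochhammer (C + of_nat d' + of_nat t) (dl - j)
            * (Kt A ms ns * of_nat (d' choose (t - j)))"
          unfolding lf_def e1 e2 e3 d'_def by (simp only: mult.assoc)
        also have "\<dots> = (Kt A ms ns * of_nat (ml choose nl)) *
            ((if j \<le> t then of_nat (d' choose (t-j)) else 0) * of_nat (dl choose j)
            * pochhammer (C + of_nat (t-j)) j * pochhammer (C + of_nat d' + of_nat t) (dl - j))"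
          unfolding bmc using jt by (simp add: algebra_simps)
        finally show ?thesis .
      qed
    qed
    also have "\<dots> = (Kt A ms ns * of_nat (ml choose nl)) * Fs d' dl t C"
      unfolding Fs_def by (simp add: sum_distrib_left)
    also have "\<dots> = (Kt A ms ns * of_nat (ml choose nl)) * (of_nat ((d' + dl) choose t) * pochhammer (C + of_nat d') dl)"
      unfolding Fs_eq by (rule refl)
    also have "\<dots> = Kt A (ms@[ml]) n * (if sum_list n \<le> s then of_nat ((sum_list (ms @ [ml]) - sum_list n) choose (s - sum_list n)) else 0)"
    proof -
      have "C + of_nat d' = A L + of_nat (M' + (N' + nl))" unfolding C_def d'_def using NM by (simp add: of_nat_diff)
      moreover have "sum_list (ms @ [ml]) - sum_list n = d' + dl" unfolding sm sn d'_def dl_def using NM nlml by simp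
      moreover have "s - sum_list n = t" unfolding sn t_def by simp
      ultimately show ?thesis unfolding Kn sn using True dl_def by (simp add: algebra_simps)
    qed
    finally show ?thesis unfolding sumT .
  qed
qed




lemma sum_atLeast1: "(\<Sum>p\<in>{1..k}. f p) = (\<Sum>q<k. f (Suc q))"
  using sum.atLeast1_atMost_eq[of f k] by simp

lemma prod_atLeast1: "(\<Prod>p\<in>{1..k}. f p) = (\<Prod>q<k. f (Suc q))"
  using prod.atLeast1_atMost_eq[of f k] by simp

lemma psum1: "k \<le> length v \<Longrightarrow> psum v 1 k = pre v k"
  unfolding psum_def pre_def sum_atLeast1 sum_list_sum_nth
  by (simp add: min_def atLeast0LessThan)

lemma tsum_eq: "tsum v = sum_list v"
  unfolding tsum_def using psum1[of "length v" v] pre_full by simp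

lemma fun_sum_apply: "finite S \<Longrightarrow> (\<Sum>x\<in>S. f x) y = (\<Sum>x\<in>S. f x y)"
  by (induction S rule: finite_induct) auto

definition Aof :: "nat list \<Rightarrow> complex list \<Rightarrow> complex \<Rightarrow> nat \<Rightarrow> complex" where
  "Aof ell a \<omega> p = of_nat (psum ell (Suc p) (length ell)) + a ! p + \<omega> + 1"

definition wf :: "complex \<Rightarrow> nat \<Rightarrow> nat \<Rightarrow> nat \<Rightarrow> complex" where
  "wf \<omega> N M s = (-1) ^ (M - s) / (pochhammer (of_nat (N + s) + \<omega>) (s - N) * pochhammer (2 * of_nat s + \<omega> + 1) (M - s))"

lemma Cbar_C:
  assumes ln: "length n = length ell" and lx: "length x = length ell" and lm: "length m = length ell"
  shows "coefCbar ell a \<omega> x n * coefC ell a \<omega> m x = wf \<omega> (sum_list n) (sum_list m) (sum_list x) * Wt (Aof ell a \<omega>) m n x"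
proof -
  let ?L = "length ell"
  have P1: "(\<Prod>p\<in>{1..?L}. of_nat ((x ! (p - 1)) choose (n ! (p - 1)))
        * pochhammer (of_nat (psum n 1 p + psum x 1 (p - 1) + psum ell p ?L) + a ! (p - 1) + \<omega> + 1)
                     (x ! (p - 1) - n ! (p - 1)))
     = (\<Prod>q<?L. of_nat (x!q choose n!q) * pochhammer (Aof ell a \<omega> q + of_nat (pre n (Suc q) + pre x q)) (x!q - n!q))"
    unfolding prod_atLeast1
  proof (rule prod.cong[OF refl])
    fix q assume "q \<in> {..<?L}"
    then have q: "q < ?L" by simp
    have "psum n 1 (Suc q) = pre n (Suc q)" by (rule psum1) (use q ln in simp)
    moreover have "psum x 1 q = pre x q" by (rule psum1) (use q lx in simp)
    ultimately
    show "of_nat ((x ! (Suc q - 1)) choose (n ! (Suc q - 1)))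
        * pochhammer (of_nat (psum n 1 (Suc q) + psum x 1 (Suc q - 1) + psum ell (Suc q) ?L) + a ! (Suc q - 1) + \<omega> + 1)
                     (x ! (Suc q - 1) - n ! (Suc q - 1))
      = of_nat (x!q choose n!q) * pochhammer (Aof ell a \<omega> q + of_nat (pre n (Suc q) + pre x q)) (x!q - n!q)"
      unfolding Aof_def by (simp add: algebra_simps)
  qed
  have P2: "(\<Prod>p\<in>{1..?L}. of_nat ((m ! (p - 1)) choose (x ! (p - 1)))
        * pochhammer (of_nat (psum m 1 (p - 1) + psum x 1 p + psum ell p ?L) + a ! (p - 1) + \<omega> + 1)
                     (m ! (p - 1) - x ! (p - 1)))
     = (\<Prod>q<?L. of_nat (m!q choose x!q) * pochhammer (Aof ell a \<omega> q + of_nat (pre m q + pre x (Suc q))) (m!q - x!q))"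
    unfolding prod_atLeast1
  proof (rule prod.cong[OF refl])
    fix q assume "q \<in> {..<?L}"
    then have q: "q < ?L" by simp
    have "psum m 1 q = pre m q" by (rule psum1) (use q lm in simp)
    moreover have "psum x 1 (Suc q) = pre x (Suc q)" by (rule psum1) (use q lx in simp)
    ultimately
    show "of_nat ((m ! (Suc q - 1)) choose (x ! (Suc q - 1)))
        * pochhammer (of_nat (psum m 1 (Suc q - 1) + psum x 1 (Suc q) + psum ell (Suc q) ?L) + a ! (Suc q - 1) + \<omega> + 1)
                     (m ! (Suc q - 1) - x ! (Suc q - 1))
      = of_nat (m!q choose x!q) * pochhammer (Aof ell a \<omega> q + of_nat (pre m q + pre x (Suc q))) (m!q - x!q)"
      unfolding Aof_def by (simp add: algebra_simps)
  qed
  have W: "Wt (Aof ell a \<omega>) m n x = (\<Prod>q<?L. of_nat (x!q choose n!q) * pochhammer (Aof ell a \<omega> q + of_nat (pre n (Suc q) + pre x q)) (x!q - n!q))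
     * (\<Prod>q<?L. of_nat (m!q choose x!q) * pochhammer (Aof ell a \<omega> q + of_nat (pre m q + pre x (Suc q))) (m!q - x!q))"
    unfolding Wt_def lx prod.distrib[symmetric] by (rule prod.cong[OF refl]) (simp add: algebra_simps)
  show ?thesis
    unfolding coefCbar_def coefC_def P1 P2 W wf_def tsum_eq by (simp add: algebra_simps)
qed


lemma sum_list_eq_imp_eq:
  fixes ns ms :: "nat list"
  assumes ln: "length ns = length ms" and le: "\<forall>p<length ms. ns!p \<le> ms!p" and ne: "ns \<noteq> ms"
  shows "sum_list ns < sum_list ms"
proof -
  have "\<exists>p<length ms. ns!p \<noteq> ms!p"
  proof (rule ccontr)
    assume "\<not> (\<exists>p<length ms. ns!p \<noteq> ms!p)"
    then have "ns = ms" by (intro nth_equalityI) (use ln in auto)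
    then show False using ne by simp
  qed
  then obtain p where p: "p < length ms" "ns!p \<noteq> ms!p" by blast
  have "(\<Sum>i\<in>{0..<length ms}. ns!i) < (\<Sum>i\<in>{0..<length ms}. ms!i)"
  proof (rule sum_strict_mono_ex1)
    show "finite {0..<length ms}" by simp
    show "\<forall>i\<in>{0..<length ms}. ns!i \<le> ms!i" using le by auto
    show "\<exists>i\<in>{0..<length ms}. ns!i < ms!i" using p le by (intro bexI[of _ p]) auto
  qed
  then show ?thesis using ln by (simp add: sum_list_sum_nth)
qed

lemma tbox_self: "tbox n n = {n}"
proof (rule set_eqI)
  fix x show "x \<in> tbox n n \<longleftrightarrow> x \<in> {n}"
  proof
    assume "x \<in> tbox n n"
    then have "length x = length n" "\<forall>p<length n. x!p = n!p" unfolding tbox_def by auto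
    then show "x \<in> {n}" by (simp add: nth_equalityI)
  qed (auto simp: tbox_def)
qed

lemma key:
  assumes ln: "length n = length ell" and lm: "length m = length ell"
    and nm: "\<forall>p<length ell. n!p \<le> m!p" and me: "\<forall>p<length ell. m!p \<le> ell!p"
    and om: "\<And>k::int. - 2 * int (tsum ell) + 1 \<le> k \<Longrightarrow> k \<le> -1 \<Longrightarrow> \<omega> \<noteq> of_int k"
  shows "(\<Sum>x\<in>tbox n m. coefCbar ell a \<omega> x n * coefC ell a \<omega> m x) = (if m = n then 1 else 0)"
proof (cases "m = n")
  case True
  then show ?thesis unfolding True tbox_self by (simp add: coefCbar_def coefC_def)
next
  case False
  define N where "N = sum_list n"
  define M where "M = sum_list m"
  define d where "d = M - N"
  define A where "A = Aof ell a \<omega>"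
  define c where "c = 2 * of_nat N + \<omega>"
  have NM: "N < M" unfolding N_def M_def using sum_list_eq_imp_eq[of n m] ln lm nm False by simp
  have Mell: "M \<le> tsum ell" unfolding M_def tsum_eq using sum_list_le[of m ell] lm me by simp
  have d1: "d \<ge> 1" unfolding d_def using NM by simp
  have Md: "M = d + N" unfolding d_def using NM by simp
  have lx: "\<And>x. x \<in> tbox n m \<Longrightarrow> length x = length ell" unfolding tbox_def using ln by simp
  have rng: "sum_list ` tbox n m \<subseteq> {N..M}"
  proof
    fix y assume "y \<in> sum_list ` tbox n m"
    then obtain x where x: "x \<in> tbox n m" "y = sum_list x" by blast
    have "N \<le> sum_list x" unfolding N_def using sum_list_le[of n x] x ln lx[OF x(1)] unfolding tbox_def by simp
    moreover have "sum_list x \<le> M" unfolding M_def using sum_list_le[of x m] x lm lx[OF x(1)] unfolding tbox_def by simp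
    ultimately show "y \<in> {N..M}" using x by simp
  qed
  have lnm: "length n = length m" "\<forall>p<length m. n!p \<le> m!p" using ln lm nm by simp_all
  have "(\<Sum>x\<in>tbox n m. coefCbar ell a \<omega> x n * coefC ell a \<omega> m x) = (\<Sum>x\<in>tbox n m. wf \<omega> N M (sum_list x) * Wt A m n x)"
    unfolding N_def M_def A_def by (rule sum.cong[OF refl], rule Cbar_C[OF ln _ lm], rule lx)
  also have "\<dots> = (\<Sum>s\<in>{N..M}. \<Sum>x\<in>{x\<in>tbox n m. sum_list x = s}. wf \<omega> N M (sum_list x) * Wt A m n x)"
    by (rule sum.group[symmetric, OF finite_tbox _ rng]) simp
  also have "\<dots> = (\<Sum>s\<in>{N..M}. wf \<omega> N M s * (Kt A m n * (if N \<le> s then of_nat ((M - N) choose (s - N)) else 0)))"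
  proof (rule sum.cong[OF refl])
    fix s assume "s \<in> {N..M}"
    have "(\<Sum>x\<in>{x\<in>tbox n m. sum_list x = s}. wf \<omega> N M (sum_list x) * Wt A m n x)
       = (\<Sum>x\<in>{x\<in>tbox n m. sum_list x = s}. wf \<omega> N M s * Wt A m n x)" by (rule sum.cong) auto
    also have "\<dots> = wf \<omega> N M s * (\<Sum>x\<in>{x\<in>tbox n m. sum_list x = s}. Wt A m n x)" by (simp add: sum_distrib_left)
    also have "\<dots> = wf \<omega> N M s * (Kt A m n * (if N \<le> s then of_nat ((M - N) choose (s - N)) else 0))"
      unfolding FT[OF lnm] N_def M_def by (rule refl)
    finally show "(\<Sum>x\<in>{x\<in>tbox n m. sum_list x = s}. wf \<omega> N M (sum_list x) * Wt A m n x)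
       = wf \<omega> N M s * (Kt A m n * (if N \<le> s then of_nat ((M - N) choose (s - N)) else 0))" .
  qed
  also have "\<dots> = (\<Sum>k\<in>{0..d}. wf \<omega> N M (k + N) * (Kt A m n * (if N \<le> k + N then of_nat ((M - N) choose (k + N - N)) else 0)))"
    unfolding Md using sum.shift_bounds_cl_nat_ivl[of "\<lambda>s. wf \<omega> N (d + N) s * (Kt A m n * (if N \<le> s then of_nat ((d + N - N) choose (s - N)) else 0))" 0 N d]
    by simp
  also have "\<dots> = Kt A m n * (\<Sum>k\<le>d. (-1)^(d-k) * of_nat (d choose k) / (pochhammer (c + of_nat k) k * pochhammer (c + 2 * of_nat k + 1) (d - k)))"
    unfolding atLeast0AtMost sum_distrib_left
  proof (rule sum.cong[OF refl])
    fix k assume "k \<in> {..d}"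
    then have kd: "k \<le> d" by simp
    have e1: "of_nat (N + (k + N)) + \<omega> = c + of_nat k" unfolding c_def by (simp add: algebra_simps)
    have e2: "2 * of_nat (k + N) + \<omega> + 1 = c + 2 * of_nat k + 1" unfolding c_def by (simp add: algebra_simps)
    have e3: "M - (k + N) = d - k" "k + N - N = k" "M - N = d" unfolding d_def by simp_all
    show "wf \<omega> N M (k + N) * (Kt A m n * (if N \<le> k + N then of_nat ((M - N) choose (k + N - N)) else 0))
       = Kt A m n * ((-1)^(d-k) * of_nat (d choose k) / (pochhammer (c + of_nat k) k * pochhammer (c + 2 * of_nat k + 1) (d - k)))"
      unfolding wf_def e1 e2 e3 by simp
  qed
  also have "\<dots> = 0"
  proof -
    have "(\<Sum>k\<le>d. (-1)^(d-k) * of_nat (d choose k) / (pochhammer (c + of_nat k) k * pochhammer (c + 2 * of_nat k + 1) (d - k))) = 0"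
    proof (rule S_zero[OF d1])
      fix i assume i: "1 \<le> i" "i \<le> 2 * d - 1"
      have "- 2 * int (tsum ell) + 1 \<le> - int (2 * N + i)" using i Mell Md by simp
      moreover have "- int (2 * N + i) \<le> -1" using i by simp
      ultimately have "\<omega> \<noteq> of_int (- int (2 * N + i))" by (rule om)
      then show "c + of_nat i \<noteq> 0" unfolding c_def by (simp add: algebra_simps add_eq_0_iff2)
    qed
    then show ?thesis by simp
  qed
  finally show ?thesis using False by simp
qed




theorem mainTheorem3:
  fixes N :: nat and ell :: "nat list" and a :: "complex list"
    and \<theta>0 \<theta>0s h hs \<omega> \<omega>s :: complex and n :: "nat list"
  assumes N: "N \<ge> 1" and len_ell: "length ell = N" and len_a: "length a = N"
    and h: "h \<noteq> 0" and hs: "hs \<noteq> 0"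
    and om: "\<And>k::int. - 2 * int (tsum ell) + 1 \<le> k \<Longrightarrow> k \<le> -1 \<Longrightarrow> \<omega> \<noteq> of_int k"
    and oms: "\<And>k::int. - 2 * int (tsum ell) + 1 \<le> k \<Longrightarrow> k \<le> -1 \<Longrightarrow> \<omega>s \<noteq> of_int k"
    and ai: "\<And>i k::int. i < N \<Longrightarrow> - int (ell ! i) \<le> k \<Longrightarrow> k \<le> -1 \<Longrightarrow>
              a ! i \<noteq> of_int k \<and> a ! i + \<omega> - \<omega>s \<noteq> of_int k
              \<and> a ! i - of_nat (tsum ell) - \<omega>s \<noteq> of_int k
              \<and> a ! i + of_nat (tsum ell) + \<omega> \<noteq> of_int k"
    and gp: "\<And>i j \<epsilon>i \<epsilon>j. i < N \<Longrightarrow> j < N \<Longrightarrow>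
              general_position (Spm \<epsilon>i (ell ! i) (a ! i) \<omega> \<omega>s) (Spm \<epsilon>j (ell ! j) (a ! j) \<omega> \<omega>s)"
    and n: "n \<in> tbox (replicate N 0) ell"
  shows "basisV n = (\<Sum>x\<in>tbox n ell. (\<lambda>m. coefCbar ell a \<omega> x n * Vvec ell a \<omega> x m))"
proof (rule ext)
  fix m
  have ln: "length n = length ell" using n len_ell unfolding tbox_def by simp
  have nle: "\<forall>p<length ell. n!p \<le> ell!p" using n len_ell unfolding tbox_def by simp
  have nin: "n \<in> tbox n ell" unfolding tbox_def using nle ln by simp
  have V: "\<And>x. Vvec ell a \<omega> x m = (if m \<in> tbox x ell then coefC ell a \<omega> m x else 0)"
  proof -
    fix x
    have "Vvec ell a \<omega> x m = (\<Sum>n'\<in>tbox x ell. coefC ell a \<omega> n' x * basisV n' m)"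
      unfolding Vvec_def by (rule fun_sum_apply[OF finite_tbox])
    also have "\<dots> = (\<Sum>n'\<in>tbox x ell. if m = n' then coefC ell a \<omega> m x else 0)"
      unfolding basisV_def by (rule sum.cong[OF refl]) auto
    also have "\<dots> = (if m \<in> tbox x ell then coefC ell a \<omega> m x else 0)"
      by (simp add: finite_tbox)
    finally show "Vvec ell a \<omega> x m = (if m \<in> tbox x ell then coefC ell a \<omega> m x else 0)" .
  qed
  have R: "(\<Sum>x\<in>tbox n ell. (\<lambda>m. coefCbar ell a \<omega> x n * Vvec ell a \<omega> x m)) m
      = (\<Sum>x\<in>tbox n ell. if m \<in> tbox x ell then coefCbar ell a \<omega> x n * coefC ell a \<omega> m x else 0)"
    unfolding fun_sum_apply[OF finite_tbox] V by (rule sum.cong[OF refl]) simp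
  show "basisV n m = (\<Sum>x\<in>tbox n ell. (\<lambda>m. coefCbar ell a \<omega> x n * Vvec ell a \<omega> x m)) m"
    unfolding R
  proof (cases "m \<in> tbox n ell")
    case True
    have lm: "length m = length ell" using True ln unfolding tbox_def by simp
    have nm: "\<forall>p<length ell. n!p \<le> m!p" and me: "\<forall>p<length ell. m!p \<le> ell!p"
      using True ln unfolding tbox_def by auto
    have set: "{x\<in>tbox n ell. m \<in> tbox x ell} = tbox n m"
    proof (rule set_eqI)
      fix x
      show "x \<in> {x\<in>tbox n ell. m \<in> tbox x ell} \<longleftrightarrow> x \<in> tbox n m"
      proof
        assume "x \<in> {x\<in>tbox n ell. m \<in> tbox x ell}"
        then have x1: "length x = length n" "\<forall>p<length n. n!p \<le> x!p"
          and x2: "\<forall>p<length x. x!p \<le> m!p" unfolding tbox_def by auto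
        show "x \<in> tbox n m" unfolding tbox_def using x1 x2 by simp
      next
        assume "x \<in> tbox n m"
        then have x1: "length x = length n" "\<forall>p<length n. n!p \<le> x!p" "\<forall>p<length n. x!p \<le> m!p"
          unfolding tbox_def by auto
        have xe: "\<forall>p<length n. x!p \<le> ell!p"
        proof (intro allI impI)
          fix p assume p: "p < length n"
          have "x!p \<le> m!p" using x1(3) p by blast
          moreover have "m!p \<le> ell!p" using me p ln by simp
          ultimately show "x!p \<le> ell!p" by (rule le_trans)
        qed
        have "x \<in> tbox n ell" unfolding tbox_def using x1 xe by simp
        moreover have "m \<in> tbox x ell" unfolding tbox_def using x1 me ln lm by simp
        ultimately show "x \<in> {x\<in>tbox n ell. m \<in> tbox x ell}" by simp
      qed
    qed
    have "(\<Sum>x\<in>tbox n ell. if m \<in> tbox x ell then coefCbar ell a \<omega> x n * coefC ell a \<omega> m x else 0)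
       = (\<Sum>x\<in>{x\<in>tbox n ell. m \<in> tbox x ell}. coefCbar ell a \<omega> x n * coefC ell a \<omega> m x)"
      by (rule sum.inter_filter[OF finite_tbox, symmetric])
    also have "\<dots> = (if m = n then 1 else 0)" unfolding set by (rule key[OF ln lm nm me om])
    finally show "basisV n m = (\<Sum>x\<in>tbox n ell. if m \<in> tbox x ell then coefCbar ell a \<omega> x n * coefC ell a \<omega> m x else 0)"
      unfolding basisV_def by simp
  next
    case False
    have z: "\<And>x. x \<in> tbox n ell \<Longrightarrow> m \<notin> tbox x ell"
    proof
      fix x assume x: "x \<in> tbox n ell" and mx: "m \<in> tbox x ell"
      have x1: "length x = length n" "\<forall>p<length n. n!p \<le> x!p" using x unfolding tbox_def by auto
      have m1: "length m = length x" "\<forall>p<length x. x!p \<le> m!p \<and> m!p \<le> ell!p" using mx unfolding tbox_def by auto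
      have nm: "\<forall>p<length n. n!p \<le> m!p \<and> m!p \<le> ell!p"
      proof (intro allI impI)
        fix p assume p: "p < length n"
        have "n!p \<le> x!p" using x1(2) p by blast
        moreover have "x!p \<le> m!p \<and> m!p \<le> ell!p" using m1(2) p x1(1) by simp
        ultimately show "n!p \<le> m!p \<and> m!p \<le> ell!p" by simp
      qed
      have "m \<in> tbox n ell" unfolding tbox_def using nm m1(1) x1(1) by simp
      then show False using False by simp
    qed
    have "m \<noteq> n" using False nin by auto
    then show "basisV n m = (\<Sum>x\<in>tbox n ell. if m \<in> tbox x ell then coefCbar ell a \<omega> x n * coefC ell a \<omega> m x else 0)"
      unfolding basisV_def using z by simp
  qed
qed


end
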